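(* Let $\Bbbk$ be a field and $q\in\Bbbk$ with $[m]_q:=1+q+\cdots+q^{m-1}\ne0$ for all $m\ge1$; put $[k]_q!=[1]_q\cdots[k]_q$. Let $f(t)=\sum_{k\ge0}\frac{t^k}{[k]_q!}$, so $a_k=1/[k]_q!$. Then for all $k\ge1$, $$P_{f,k}(t)=\frac{(t-1)(t-q)\cdots(t-q^{k-1})}{[k]_q!},$$ where $P_{f,k}(t)=(-1)^k\det\begin{pmatrix} 1&a_1t&\ldots &a_kt^k\\ 1&a_1&\ldots &a_k\\ 0&1&\ldots &a_{k-1}\\ \vdots&\ddots&\ddots&\vdots\\ 0&\ldots &1&a_1 \end{pmatrix}$.
   Context: The determinant is $(k+1)\times(k+1)$: first row $(1,a_1t,\dots,a_kt^k)$, second row $(1,a_1,\dots,a_k)$, row $r\ge3$ has zeros in its first $r-2$ entries, $1$ in entry $r-1$, then $a_1,a_2,\dots$. *)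

theory Defs
  imports "HOL-Computational_Algebra.Polynomial" "Jordan_Normal_Form.Determinant"
begin

definition q_int :: "'a::comm_ring_1 \<Rightarrow> nat \<Rightarrow> 'a" where
  "q_int q m = (\<Sum>i<m. q ^ i)"

definition q_fact :: "'a::comm_ring_1 \<Rightarrow> nat \<Rightarrow> 'a" where
  "q_fact q k = (\<Prod>m\<in>{1..k}. q_int q m)"

text \<open>The (k+1)x(k+1) matrix (0-indexed rows/columns) with polynomial entries:
  row 0 is (1, a_1 t, ..., a_k t^k); row i >= 1 has entry a_(j+1-i) in column j
  when j+1 >= i and 0 otherwise (with a_0 = 1 in position (i, i-1)).\<close>
definition P_matrix :: "(nat \<Rightarrow> 'a::comm_ring_1) \<Rightarrow> nat \<Rightarrow> 'a poly mat" where
  "P_matrix a k = mat (k+1) (k+1) (\<lambda>(i,j).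
     if i = 0 then (if j = 0 then 1 else monom (a j) j)
     else if i \<le> j + 1 then (if j + 1 = i then 1 else [:a (j + 1 - i):])
     else 0)"

definition P_poly :: "(nat \<Rightarrow> 'a::comm_ring_1) \<Rightarrow> nat \<Rightarrow> 'a poly" where
  "P_poly a k = (-1) ^ k * det (P_matrix a k)"

end

theory Submission
  imports Defs
begin

fun gq :: "'a::field \<Rightarrow> nat \<Rightarrow> 'a" where
  "gq q 0 = 1"
| "gq q (Suc m) = - (q ^ m) * gq q m / q_int q (Suc m)"

definition cq :: "'a::field \<Rightarrow> nat \<Rightarrow> nat \<Rightarrow> 'a" where
  "cq q k j = (1 / q_fact q j) * gq q (k - j)"

definition Qq :: "'a::field \<Rightarrow> nat \<Rightarrow> 'a poly" where
  "Qq q k = (\<Sum>j\<le>k. monom (cq q k j) j)"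

lemma q_fact_0[simp]: "q_fact q 0 = 1" by (simp add: q_fact_def)
lemma q_fact_Suc: "q_fact q (Suc n) = q_fact q n * q_int q (Suc n)"
  by (simp add: q_fact_def prod.cl_ivl_Suc mult.commute)
lemma q_int_Suc: "q_int q (Suc n) = q_int q n + q ^ n"
  by (simp add: q_int_def)
lemma q_int_add: "q_int q (j + m) = q_int q j + q ^ j * q_int q m"
  by (induction m) (simp_all add: q_int_Suc algebra_simps power_add q_int_def)

lemma q_fact_nz:
  assumes "\<And>m. m \<ge> 1 \<Longrightarrow> q_int (q::'a::field) m \<noteq> 0"
  shows "q_fact q n \<noteq> 0"
  using assms by (induction n) (auto simp: q_fact_Suc)

lemma coeff_Qq: "coeff (Qq q k) n = (if n \<le> k then cq q k n else 0)"
  by (simp add: Qq_def coeff_sum coeff_monom)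

lemma lin_mult: "[:-x, 1:] * p = pCons 0 p - smult (x::'a::field) p"
  by (rule poly_eqI) (simp add: coeff_pCons split: nat.split)

lemma key_arith:
  fixes A G X Y Z q :: "'a::field"
  assumes "X \<noteq> 0" "Y \<noteq> 0" "Z = X + q^(Suc j) * Y"
  shows "Z * ((A/X) * (-(q^m) * G / Y)) = A * (-(q^m)*G/Y) - q^(Suc j + m) * ((A/X) * G)"
  using assms by (simp add: field_simps power_add)

lemma cq_rec:
  assumes nz: "\<And>m. m \<ge> 1 \<Longrightarrow> q_int (q::'a::field) m \<noteq> 0"
  shows "q_int q (Suc k) * (if n \<le> Suc k then cq q (Suc k) n else 0)
    = (if n = 0 then 0 else (if n - 1 \<le> k then cq q k (n - 1) else 0))
      - q ^ k * (if n \<le> k then cq q k n else 0)"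
proof -
  have qf: "\<And>n. q_fact q n \<noteq> 0" using q_fact_nz[OF nz] .
  have qi: "\<And>n. q_int q (Suc n) \<noteq> 0" using nz by simp
  consider "n = 0" | "n = Suc k" | "n > Suc k" | j m where "n = Suc j" "k = Suc j + m"
  proof -
    assume h1: "n = 0 \<Longrightarrow> thesis" and h2: "n = Suc k \<Longrightarrow> thesis"
      and h3: "n > Suc k \<Longrightarrow> thesis"
      and h4: "\<And>j m. n = Suc j \<Longrightarrow> k = Suc j + m \<Longrightarrow> thesis"
    show thesis
    proof (cases n)
      case 0 then show ?thesis using h1 by simp
    next
      case (Suc j)
      show ?thesis
      proof (cases "Suc j \<le> k")
        case True
        then have "k = Suc j + (k - Suc j)" by simp
        then show ?thesis using h4[OF Suc] by blast
      next
        case False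
        then show ?thesis using h2 h3 Suc by (cases "j = k") auto
      qed
    qed
  qed
  then show ?thesis
  proof cases
    case 1
    then show ?thesis using qf qi
      by (simp add: cq_def)
  next
    case 2
    then show ?thesis using qf qi
      by (simp add: cq_def q_fact_Suc)
  next
    case 3
    then show ?thesis by simp
  next
    case 4
    have e1: "Suc k - Suc j = Suc m" "k - j = Suc m" "k - Suc j = m" using 4 by auto
    have qadd: "q_int q (Suc k) = q_int q (Suc j) + q ^ Suc j * q_int q (Suc m)"
      using q_int_add[of q "Suc j" "Suc m"] 4 by simp
    have a1: "1/q_fact q (Suc j) = (1/q_fact q j)/q_int q (Suc j)" by (simp add: q_fact_Suc)
    have kk: "q^k = q^(Suc j + m)" using 4 by simp
    have main: "q_int q (Suc k) * cq q (Suc k) (Suc j) = cq q k j - q^k * cq q k (Suc j)"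
      unfolding cq_def e1 a1 gq.simps(2) kk
      by (rule key_arith[OF qi qi qadd])
    show ?thesis using main 4 by simp
  qed
qed

lemma Qq_Suc:
  assumes nz: "\<And>m. m \<ge> 1 \<Longrightarrow> q_int (q::'a::field) m \<noteq> 0"
  shows "smult (q_int q (Suc k)) (Qq q (Suc k)) = [:-(q^k), 1:] * Qq q k"
proof (rule poly_eqI)
  fix n
  show "coeff (smult (q_int q (Suc k)) (Qq q (Suc k))) n = coeff ([:-(q^k), 1:] * Qq q k) n"
  proof (cases n)
    case 0
    then show ?thesis unfolding lin_mult using cq_rec[OF nz, of k 0]
      by (simp add: coeff_Qq coeff_pCons)
  next
    case (Suc j)
    then show ?thesis unfolding lin_mult using cq_rec[OF nz, of k "Suc j"]
      by (simp add: coeff_Qq coeff_pCons)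
  qed
qed

lemma Qq_closed:
  assumes nz: "\<And>m. m \<ge> 1 \<Longrightarrow> q_int (q::'a::field) m \<noteq> 0"
  shows "Qq q k = smult (1 / q_fact q k) (\<Prod>i<k. [:- (q ^ i), 1:])"
proof (induction k)
  case 0
  then show ?case by (simp add: Qq_def cq_def monom_0 one_pCons)
next
  case (Suc k)
  have qi: "q_int q (Suc k) \<noteq> 0" using nz by simp
  have "Qq q (Suc k) = smult (1/q_int q (Suc k)) (smult (q_int q (Suc k)) (Qq q (Suc k)))"
    using qi by simp
  also have "\<dots> = smult (1 / q_int q (Suc k)) ([:-(q^k), 1:] * Qq q k)"
    using Qq_Suc[OF nz, of k] by simp
  finally show ?case using Suc by (simp add: q_fact_Suc mult.commute mult.left_commute)
qed

lemma orth:
  assumes nz: "\<And>m. m \<ge> 1 \<Longrightarrow> q_int (q::'a::field) m \<noteq> 0" and "N \<ge> 1"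
  shows "(\<Sum>n\<le>N. cq q N n) = 0"
proof -
  have "(\<Sum>n\<le>N. cq q N n) = poly (Qq q N) 1"
    by (simp add: Qq_def poly_sum poly_monom)
  also have "\<dots> = 0"
  proof -
    have "\<exists>i\<in>{..<N}. poly [:- (q ^ i), 1:] 1 = 0"
      using assms(2) by (intro bexI[of _ 0]) auto
    then have "(\<Prod>i<N. poly [:- (q ^ i), 1:] 1) = 0"
      by (intro prod_zero) auto
    then show ?thesis by (simp add: Qq_closed[OF nz] poly_prod)
  qed
  finally show ?thesis .
qed

lemma prod_list_ones: "prod_list (map (\<lambda>_. (1::'b::monoid_mult)) xs) = 1"
  by (induction xs) auto

lemma monom_const_mult: "monom c l * [:d:] = monom (c * d) l"
  by (simp add: monom_0[symmetric] mult_monom)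

lemma shift_sum:
  fixes F :: "nat \<Rightarrow> 'a::comm_monoid_add"
  assumes "i0 \<le> k"
  shows "(\<Sum>l\<in>{0..<Suc k}. if i0 \<le> l then F l else 0) = (\<Sum>n\<le>k - i0. F (n + i0))"
proof -
  have "(\<Sum>l\<in>{0..<Suc k}. if i0 \<le> l then F l else 0) = (\<Sum>l\<in>{i0..k}. F l)"
    by (rule sum.mono_neutral_cong_right) auto
  also have "\<dots> = (\<Sum>l\<in>{0+i0..(k-i0)+i0}. F l)" using assms by simp
  also have "\<dots> = (\<Sum>n\<in>{0..k-i0}. F (n + i0))" by (rule sum.shift_bounds_cl_nat_ivl)
  finally show ?thesis by (simp add: atMost_atLeast0)
qed

theorem proposition2p4:
  fixes q :: "'a::field" and k :: nat
  assumes "\<And>m. m \<ge> 1 \<Longrightarrow> q_int q m \<noteq> 0"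
    and "k \<ge> 1"
  shows "P_poly (\<lambda>n. 1 / q_fact q n) k
         = smult (1 / q_fact q k) (\<Prod>i<k. [:- (q ^ i), 1:])"
proof -
  note nz = assms(1)
  define a where "a = (\<lambda>n. 1 / q_fact q n)"
  define M where "M = P_matrix a k"
  define U where "U = mat (k+1) (k+1) (\<lambda>(i,j). if j = k then [:gq q (k-i):] else if i = j then (1::'a poly) else 0)"
  define N where "N = mat (k+1) (k+1) (\<lambda>(i,j). if j = k then (if i = 0 then Qq q k else 0) else M $$ (i,j))"
  have a0: "a 0 = 1" by (simp add: a_def)
  have Mc: "M \<in> carrier_mat (k+1) (k+1)" by (simp add: M_def P_matrix_def)
  have Uc: "U \<in> carrier_mat (k+1) (k+1)" by (simp add: U_def)
  have Nc: "N \<in> carrier_mat (k+1) (k+1)" by (simp add: N_def)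
  have Mij: "M $$ (i,j) = (if i = 0 then (if j = 0 then 1 else monom (a j) j)
     else if i \<le> j + 1 then [:a (j + 1 - i):] else 0)" if "i < k+1" "j < k+1" for i j
    using that a0 by (auto simp: M_def P_matrix_def)
  have detU: "det U = 1"
  proof -
    have ut: "upper_triangular U" by (auto simp: upper_triangular_def U_def)
    have "diag_mat U = map (\<lambda>_. 1) [0..<k+1]"
      unfolding diag_mat_def using Uc by (intro map_cong) (auto simp: U_def)
    then show ?thesis using det_upper_triangular[OF ut Uc] by (simp only: prod_list_ones)
  qed
  have MU: "M * U = N"
  proof (rule eq_matI)
    fix i j assume i: "i < dim_row N" and j: "j < dim_col N"
    then have i': "i < k+1" and j': "j < k+1" by (auto simp: N_def)
    have "(M * U) $$ (i,j) = (\<Sum>l\<in>{0..<k+1}. M $$ (i,l) * U $$ (l,j))"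
      using i' j' Mc Uc by (simp add: index_mult_mat scalar_prod_def)
    also have "\<dots> = N $$ (i,j)"
    proof (cases "j = k")
      case False
      have "(\<Sum>l\<in>{0..<k+1}. M $$ (i,l) * U $$ (l,j)) = (\<Sum>l\<in>{0..<k+1}. if l = j then M $$ (i,l) else 0)"
        by (rule sum.cong) (use False j' in \<open>auto simp: U_def\<close>)
      also have "\<dots> = M $$ (i,j)" using j' by simp
      finally show ?thesis using False i' j' by (simp add: N_def)
    next
      case True
      have "(\<Sum>l\<in>{0..<k+1}. M $$ (i,l) * U $$ (l,j)) = (\<Sum>l\<in>{0..<k+1}. M $$ (i,l) * [:gq q (k-l):])"
        by (rule sum.cong) (use True in \<open>auto simp: U_def\<close>)
      also have "\<dots> = N $$ (i,j)"
      proof (cases i)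
        case 0
        have "(\<Sum>l\<in>{0..<k+1}. M $$ (i,l) * [:gq q (k-l):]) = (\<Sum>l\<in>{0..<k+1}. monom (cq q k l) l)"
          by (rule sum.cong) (use 0 in \<open>auto simp: Mij monom_const_mult cq_def a_def monom_0 smult_monom\<close>)
        also have "\<dots> = Qq q k" by (simp add: Qq_def atLeast0LessThan lessThan_Suc_atMost)
        finally show ?thesis using 0 True i' by (simp add: N_def)
      next
        case (Suc i0)
        have ik: "i0 \<le> k - 1" "i0 < k" using i' Suc by auto
        have "(\<Sum>l\<in>{0..<k+1}. M $$ (i,l) * [:gq q (k-l):]) = (\<Sum>l\<in>{0..<k+1}. [:if i0 \<le> l then a (l - i0) * gq q (k - l) else 0:])"
          by (rule sum.cong) (use Suc i' in \<open>auto simp: Mij\<close>)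
        also have "\<dots> = [:\<Sum>l\<in>{0..<Suc k}. if i0 \<le> l then a (l - i0) * gq q (k - l) else 0:]"
          by (simp add: sum_to_poly)
        also have "(\<Sum>l\<in>{0..<Suc k}. if i0 \<le> l then a (l - i0) * gq q (k - l) else 0)
            = (\<Sum>n\<le>k - i0. a (n + i0 - i0) * gq q (k - (n + i0)))"
          using shift_sum[of i0 k "\<lambda>l. a (l - i0) * gq q (k - l)"] ik by simp
        also have "\<dots> = (\<Sum>n\<le>k - i0. cq q (k - i0) n)"
          by (rule sum.cong) (auto simp: cq_def a_def diff_diff_left add.commute)
        also have "\<dots> = 0" using orth[OF nz, of "k - i0"] ik by simp
        finally show ?thesis using Suc True i' by (simp add: N_def)
      qed
      finally show ?thesis .
    qed
    finally show "(M * U) $$ (i,j) = N $$ (i,j)" .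
  next
    show "dim_row (M * U) = dim_row N" "dim_col (M * U) = dim_col N"
      using Mc Uc by (auto simp: N_def)
  qed
  have detD: "det (mat_delete N 0 k) = 1"
  proof -
    have Dc: "mat_delete N 0 k \<in> carrier_mat k k" using mat_delete_carrier[OF Nc] by simp
    have De: "mat_delete N 0 k $$ (i,j) = M $$ (Suc i, j)" if "i < k" "j < k" for i j
      using that by (simp add: mat_delete_def N_def)
    have ut: "upper_triangular (mat_delete N 0 k)"
      unfolding upper_triangular_def using Dc by (auto simp: De Mij a0 one_pCons)
    have "diag_mat (mat_delete N 0 k) = map (\<lambda>_. 1) [0..<k]"
      unfolding diag_mat_def using Dc by (intro map_cong) (auto simp: De Mij a0 one_pCons)
    then show ?thesis using det_upper_triangular[OF ut Dc] by (simp only: prod_list_ones)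
  qed
  have detN: "det N = (-1)^k * Qq q k"
  proof -
    have "det N = (\<Sum>i<k+1. N $$ (i,k) * cofactor N i k)"
      by (rule laplace_expansion_column[OF Nc]) simp
    also have "\<dots> = (\<Sum>i<k+1. if i = 0 then Qq q k * cofactor N 0 k else 0)"
      by (rule sum.cong) (auto simp: N_def)
    also have "\<dots> = Qq q k * cofactor N 0 k" by simp
    also have "\<dots> = (-1)^k * Qq q k" by (simp add: cofactor_def detD)
    finally show ?thesis .
  qed
  have "det M = det N" using det_mult[OF Mc Uc] MU detU by simp
  then have "P_poly a k = (-1)^k * ((-1)^k * Qq q k)" by (simp add: P_poly_def M_def detN)
  also have "\<dots> = Qq q k" by (simp flip: power_add mult.assoc add: mult.assoc[symmetric] power_add[symmetric])
  finally show ?thesis by (simp add: a_def Qq_closed[OF nz])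
qed

end
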